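(* Fix $C_1,C_2$ with $C_2>0$, $C_1\le 0$ and $2C_1+C_2>0$, and fix $C_3\in(0,C_{3,crit})$. Then $\mathfrak L(C_1,C_2,C_3,b)$ is strictly increasing in $b$ on $(b_-(C_3),b_+(C_3))$.
   Context: Let real constants $C_1,C_2$ be given with $2C_1+C_2>0$, and let $C_{3,crit}=\frac1{27}(2C_1+C_2)^3$. For $C_3\in(0,C_{3,crit})$, let $\phi_1<\phi_2<\phi_3$ be the roots of $2(\phi-C_1)^2(\phi+\frac{C_2}2)=C_3$; they satisfy $-\frac{C_2}{2}<\phi_1<\frac{C_1-C_2}{3}<\phi_2<C_1<\phi_3$. Let $U(\phi)=-\frac12\phi^2-\frac12C_2\phi-\frac12C_1C_2-\frac{C_3}{2(\phi-C_1)}$. Set $b_-(C_3)=U(\phi_2)$ and $b_+(C_3)=U(\phi_1)$. For $b\in(b_-(C_3),b_+(C_3))$, let $\phi_-<\phi_+$ be the two solutions of $U(\phi)=b$ with $\phi_1<\phi_-<\phi_2<\phi_+<C_1$. Define $$\mathfrak L(C_1,C_2,C_3,b)=2\int_{\phi_-}^{\phi_+}\frac{d\phi}{\sqrt{2(b-U(\phi))}}.$$ This is the period of the periodic orbit of $\frac12\dot\phi^2+U(\phi)=b$, which describes travelling waves of the DGH equation. *)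

theory Defs
  imports "HOL-Analysis.Analysis"
begin

definition C3crit :: "real \<Rightarrow> real \<Rightarrow> real" where
  "C3crit C1 C2 = (2*C1 + C2)^3 / 27"

definition cubic_roots :: "real \<Rightarrow> real \<Rightarrow> real \<Rightarrow> real set" where
  "cubic_roots C1 C2 C3 = {phi. 2*(phi - C1)^2*(phi + C2/2) = C3}"

definition phi1 :: "real \<Rightarrow> real \<Rightarrow> real \<Rightarrow> real" where
  "phi1 C1 C2 C3 = Min (cubic_roots C1 C2 C3)"

definition phi2 :: "real \<Rightarrow> real \<Rightarrow> real \<Rightarrow> real" where
  "phi2 C1 C2 C3 = Min (cubic_roots C1 C2 C3 - {phi1 C1 C2 C3})"

definition U :: "real \<Rightarrow> real \<Rightarrow> real \<Rightarrow> real \<Rightarrow> real" where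
  "U C1 C2 C3 phi = - (1/2)*phi^2 - (1/2)*C2*phi - (1/2)*C1*C2 - C3 / (2*(phi - C1))"

definition b_minus :: "real \<Rightarrow> real \<Rightarrow> real \<Rightarrow> real" where
  "b_minus C1 C2 C3 = U C1 C2 C3 (phi2 C1 C2 C3)"

definition b_plus :: "real \<Rightarrow> real \<Rightarrow> real \<Rightarrow> real" where
  "b_plus C1 C2 C3 = U C1 C2 C3 (phi1 C1 C2 C3)"

text \<open>The turning points phi_- < phi_+ of the periodic orbit at energy b.\<close>
definition phi_minus :: "real \<Rightarrow> real \<Rightarrow> real \<Rightarrow> real \<Rightarrow> real" where
  "phi_minus C1 C2 C3 b =
     (THE phi. phi1 C1 C2 C3 < phi \<and> phi < phi2 C1 C2 C3 \<and> U C1 C2 C3 phi = b)"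

definition phi_plus :: "real \<Rightarrow> real \<Rightarrow> real \<Rightarrow> real \<Rightarrow> real" where
  "phi_plus C1 C2 C3 b =
     (THE phi. phi2 C1 C2 C3 < phi \<and> phi < C1 \<and> U C1 C2 C3 phi = b)"

text \<open>The period (an improper integral with integrable endpoint singularities;
  the integrand is nonnegative, so the Henstock-Kurzweil integral agrees with
  the Lebesgue one).\<close>
definition period_L :: "real \<Rightarrow> real \<Rightarrow> real \<Rightarrow> real \<Rightarrow> real" where
  "period_L C1 C2 C3 b =
     2 * integral {phi_minus C1 C2 C3 b .. phi_plus C1 C2 C3 b}
           (\<lambda>phi. 1 / sqrt (2 * (b - U C1 C2 C3 phi)))"

end

theory Submission
  imports Defs
begin

lemma key_abstract:
  fixes q x y px py A A0 A1 :: real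
  assumes px: "px > 0" and py: "py > 0" and chi: "px * x < py * y"
    and xy: "0 < x" "x < y" "y < q"
    and A0: "A0 \<le> A" and A1: "A \<le> A1"
    and E0: "px * (x + q/2 - A0) + py * (y + q/2 + A0) > 0"
    and E1: "px * (x + q/2 - A1) + py * (y + q/2 + A1) > 0"
  shows "px * (x + q/2 - A) + py * (y + q/2 + A) > 0"
proof (cases "py \<ge> px")
  case True
  have "px * (x + q/2 - A) + py * (y + q/2 + A) = px * (x + q/2 - A0) + py * (y + q/2 + A0) + (A - A0)*(py - px)"
    by (simp add: algebra_simps)
  moreover have "(A - A0)*(py - px) \<ge> 0" using True A0 by simp
  ultimately show ?thesis using E0 by linarith
next
  case False
  have "px * (x + q/2 - A) + py * (y + q/2 + A) = px * (x + q/2 - A1) + py * (y + q/2 + A1) + (A1 - A)*(px - py)"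
    by (simp add: algebra_simps)
  moreover have "(A1 - A)*(px - py) \<ge> 0" using False A1 by simp
  ultimately show ?thesis using E1 by linarith
qed

lemma E1_lemma:
  fixes q x y px py :: real
  assumes px: "px > 0" and py: "py > 0" and chi: "px * x < py * y"
    and xy: "0 < x" "x < y" "y < q"
  shows "px * (x + q/2 - (q*(x+y)/2 - x*y)/(y-x)) + py * (y + q/2 + (q*(x+y)/2 - x*y)/(y-x)) > 0"
proof -
  have yx: "y - x > 0" using xy by simp
  define D where "D = (q*(x+y)/2 - x*y)/(y-x)"
  have yD: "(y-x)*D = q*(x+y)/2 - x*y" using yx by (simp add: D_def)
  have "(y - x) * (px * (x + q/2 - D) + py * (y + q/2 + D))
     = px*((y-x)*(x+q/2)) - px*((y-x)*D) + py*((y-x)*(y+q/2)) + py*((y-x)*D)"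
    by (simp add: algebra_simps)
  also have "\<dots> = (py*y) * (y - 2*x + q) - (px*x) * (q + x - 2*y)"
    unfolding yD by (simp add: field_simps)
  finally have eq: "(y - x) * (px * (x + q/2 - D) + py * (y + q/2 + D)) = (py*y) * (y - 2*x + q) - (px*x) * (q + x - 2*y)" .
  have "(py*y) * (y - 2*x + q) - (px*x) * (q + x - 2*y) > 0"
  proof (cases "q + x - 2*y \<le> 0")
    case True
    have "(px*x) * (q + x - 2*y) \<le> 0" using True px xy by (simp add: mult_nonneg_nonpos)
    moreover have "(py*y) * (y - 2*x + q) > 0" using py xy by simp
    ultimately show ?thesis by linarith
  next
    case False
    have "(px*x) * (q + x - 2*y) < (py*y) * (q + x - 2*y)" using chi False by simp
    also have "\<dots> \<le> (py*y) * (y - 2*x + q)" using py xy by (intro mult_left_mono) auto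
    finally show ?thesis by linarith
  qed
  then show ?thesis using eq yx unfolding D_def by (metis zero_less_mult_pos)
qed

definition phiq :: "real \<Rightarrow> real \<Rightarrow> real" where
  "phiq q s = 1 / ((q - s)^2 * sqrt (s / (q - s)))"

lemma phiq_pos: "0 < s \<Longrightarrow> s < q \<Longrightarrow> phiq q s > 0"
  unfolding phiq_def by simp

lemma chi_mono:
  assumes "0 < x" "x < y" "y < q"
  shows "phiq q x * x < phiq q y * y"
proof -
  have e: "phiq q s * s = sqrt (s/(q-s)) / (q - s)" if "0 < s" "s < q" for s
  proof -
    define S where "S = sqrt (s/(q-s))"
    have S0: "S > 0" using that by (simp add: S_def)
    have S2: "S^2 = s/(q-s)" using that by (simp add: S_def)
    have sS: "s = (q-s)*S^2" using S2 that by (simp add: field_simps)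
    have "phiq q s * s = s / ((q-s)^2 * S)" unfolding phiq_def S_def by simp
    also have "\<dots> = ((q-s)*S^2) / ((q-s)^2 * S)" using sS by simp
    also have "\<dots> = S/(q-s)" using S0 that by (subst frac_eq_eq) (auto simp: power2_eq_square)
    finally show ?thesis by (simp add: S_def)
  qed
  have "x/(q-x) < y/(q-y)" using assms by (simp add: field_simps)
  then have s1: "sqrt (x/(q-x)) < sqrt (y/(q-y))" by simp
  have s2: "1/(q-x) < 1/(q-y)" using assms by (simp add: field_simps)
  have "sqrt (x/(q-x)) / (q-x) < sqrt (y/(q-y)) / (q-y)"
  proof -
    have "sqrt (x/(q-x)) * (1/(q-x)) < sqrt (y/(q-y)) * (1/(q-y))"
      using s1 s2 assms by (intro mult_strict_mono) auto
    then show ?thesis by simp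
  qed
  then show ?thesis using e assms by simp
qed

lemma key_ineq:
  fixes q m w r :: real
  assumes w: "0 < w" and r: "0 \<le> r" "r \<le> 1" and mw: "0 < m - w" "m + w < q"
  defines "N \<equiv> m*q - m^2 + w^2"
  shows "phiq q (m - w*r) * ((m - w*r) + q/2 - r*N/(2*w))
       + phiq q (m + w*r) * ((m + w*r) + q/2 + r*N/(2*w)) > 0"
proof (cases "r = 0")
  case True
  have "m > 0" "m < q" using w mw by auto
  then show ?thesis using True phiq_pos[of m q] by simp
next
  case False
  then have r0: "r > 0" using r by simp
  define x where "x = m - w*r"
  define y where "y = m + w*r"
  have wr: "w*r \<le> w" using w r by (simp add: mult_le_cancel_left1)
  have wr0: "w*r > 0" using w r0 by simp
  have xy: "0 < x" "x < y" "y < q" using wr wr0 mw unfolding x_def y_def by auto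
  have px: "phiq q x > 0" and py: "phiq q y > 0" using xy phiq_pos by auto
  have chi: "phiq q x * x < phiq q y * y" using chi_mono xy by blast
  define A where "A = r*N/(2*w)"
  define A0 where "A0 = w*r/2"
  define A1 where "A1 = (q*(x+y)/2 - x*y)/(y-x)"
  have mq: "m*q - m^2 \<ge> 0"
  proof -
    have "m*q - m^2 = m*(q-m)" by (simp add: power2_eq_square algebra_simps)
    moreover have "m > 0" "q - m > 0" using w mw by auto
    ultimately show ?thesis by simp
  qed
  have A_split: "A = r*(m*q - m^2)/(2*w) + w*r/2" unfolding A_def N_def using w
    by (simp add: field_simps power2_eq_square)
  have "A0 \<le> A" unfolding A0_def A_split using mq w r0 by simp
  moreover have "A \<le> A1"
  proof -
    have A1e: "A1 = (m*q - m^2)/(2*(w*r)) + w*r/2" unfolding A1_def x_def y_def using wr0 w r0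
      by (simp add: field_simps power2_eq_square)
    have "r*(m*q - m^2)/(2*w) \<le> (m*q - m^2)/(2*(w*r))"
    proof -
      have "r*(m*q - m^2)/(2*w) = (r*r)*((m*q - m^2)/(2*(w*r)))" using w r0 by (simp add: field_simps)
      also have "\<dots> \<le> 1*((m*q - m^2)/(2*(w*r)))"
        using r r0 mq wr0 by (intro mult_right_mono) (auto simp: mult_le_one)
      finally show ?thesis by simp
    qed
    then show ?thesis unfolding A_split A1e by simp
  qed
  moreover have "phiq q x * (x + q/2 - A0) + phiq q y * (y + q/2 + A0) > 0"
  proof -
    have "x + q/2 - A0 > 0" unfolding x_def A0_def using wr mw w by linarith
    moreover have "y + q/2 + A0 > 0" unfolding y_def A0_def using wr0 mw w by linarith
    ultimately show ?thesis using px py by (simp add: add_pos_pos)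
  qed
  moreover have "phiq q x * (x + q/2 - A1) + phiq q y * (y + q/2 + A1) > 0"
    unfolding A1_def using E1_lemma[OF px py chi xy] .
  ultimately have "phiq q x * (x + q/2 - A) + phiq q y * (y + q/2 + A) > 0"
    using key_abstract[OF px py chi xy] by blast
  then show ?thesis unfolding x_def y_def A_def .
qed

definition Fq :: "real \<Rightarrow> real \<Rightarrow> real" where "Fq q s = sqrt (s / (q - s))"
definition mq :: "real \<Rightarrow> real \<Rightarrow> real" where "mq a q = a - q/2"
definition Dq :: "real \<Rightarrow> real \<Rightarrow> real \<Rightarrow> real" where "Dq a c q = (a - q/2)^2 - 2*c/q"
definition wq :: "real \<Rightarrow> real \<Rightarrow> real \<Rightarrow> real" where "wq a c q = sqrt (Dq a c q)"
definition Hq :: "real \<Rightarrow> real \<Rightarrow> real \<Rightarrow> real \<Rightarrow> real" where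
  "Hq a c r q = Fq q (mq a q - wq a c q * r) + Fq q (mq a q + wq a c q * r)"

lemma Fq_deriv:
  assumes d: "(s has_real_derivative ds) (at q)" and s: "0 < s q" "s q < q"
  shows "((\<lambda>q. Fq q (s q)) has_real_derivative (q*ds - s q) * phiq q (s q) / 2) (at q)"
proof -
  have pos: "s q / (q - s q) > 0" using s by simp
  have D: "((\<lambda>q. sqrt (s q / (q - s q))) has_real_derivative
     inverse (sqrt (s q / (q - s q))) / 2 * ((ds * (q - s q) - s q * (1 - ds)) / (q - s q)^2)) (at q)"
    apply (rule DERIV_chain2[where f=sqrt])
     apply (rule DERIV_real_sqrt[OF pos])
    using s by (auto intro!: derivative_eq_intros d simp: power2_eq_square)
  have E: "inverse (sqrt (s q / (q - s q))) / 2 * ((ds * (q - s q) - s q * (1 - ds)) / (q - s q)^2)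
      = (q*ds - s q) * phiq q (s q) / 2"
    unfolding phiq_def by (simp add: field_simps)
  show ?thesis using D unfolding E Fq_def .
qed

definition validq :: "real \<Rightarrow> real \<Rightarrow> real \<Rightarrow> bool" where
  "validq a c q \<longleftrightarrow> 0 < q \<and> Dq a c q > 0 \<and> 0 < mq a q - wq a c q \<and> mq a q + wq a c q < q"

lemma wq_deriv:
  assumes "0 < q" "Dq a c q > 0"
  shows "(wq a c has_real_derivative (-(a - q/2) + 2*c/q^2) / (2 * wq a c q)) (at q)"
proof -
  have D: "(Dq a c has_real_derivative (-(a - q/2) + 2*c/q^2)) (at q)"
    unfolding Dq_def using assms
    by (auto intro!: derivative_eq_intros simp: power2_eq_square field_simps)
  have "((\<lambda>q. sqrt (Dq a c q)) has_real_derivative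
      inverse (sqrt (Dq a c q)) / 2 * (-(a - q/2) + 2*c/q^2)) (at q)"
    by (rule DERIV_chain2[where f=sqrt, OF DERIV_real_sqrt[OF assms(2)] D])
  then show ?thesis unfolding wq_def by (simp add: field_simps)
qed

lemma Hq_deriv_neg:
  assumes v: "validq a c q" and r: "0 \<le> r" "r \<le> 1"
  shows "\<exists>d. (Hq a c r has_real_derivative d) (at q) \<and> d < 0"
proof -
  define m where "m = mq a q"
  define w where "w = wq a c q"
  define dw where "dw = (-(a - q/2) + 2*c/q^2) / (2 * w)"
  have q0: "0 < q" and D0: "Dq a c q > 0" and mw: "0 < m - w" "m + w < q"
    using v unfolding validq_def m_def w_def by auto
  have w0: "w > 0" unfolding w_def wq_def using D0 by simp
  have w2: "w^2 = m^2 - 2*c/q" unfolding w_def wq_def m_def mq_def using D0 by (simp add: Dq_def)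
  have dwD: "(wq a c has_real_derivative dw) (at q)" unfolding dw_def w_def using wq_deriv[OF q0 D0] .
  have wr: "w*r \<le> w" using w0 r by (simp add: mult_le_cancel_left1)
  have wr0: "w*r \<ge> 0" using w0 r by simp
  define x where "x = m - w*r"
  define y where "y = m + w*r"
  have xs: "0 < x" "x < q" "0 < y" "y < q" using wr wr0 mw unfolding x_def y_def by auto
  have dx: "((\<lambda>q. mq a q - wq a c q * r) has_real_derivative (-1/2 - dw*r)) (at q)"
    unfolding mq_def by (auto intro!: derivative_eq_intros dwD)
  have dy: "((\<lambda>q. mq a q + wq a c q * r) has_real_derivative (-1/2 + dw*r)) (at q)"
    unfolding mq_def by (auto intro!: derivative_eq_intros dwD)
  have H: "(Hq a c r has_real_derivative
        (q*(-1/2 - dw*r) - x) * phiq q x / 2 + (q*(-1/2 + dw*r) - y) * phiq q y / 2) (at q)"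
    unfolding Hq_def
    using Fq_deriv[OF dx] Fq_deriv[OF dy] xs unfolding x_def y_def m_def w_def
    by (auto intro!: derivative_eq_intros)
  define N where "N = m*q - m^2 + w^2"
  have qdw: "q*dw = - N/(2*w)"
  proof -
    have c1: "q*(2*c/q^2) = m^2 - w^2" using q0 w2 by (simp add: power2_eq_square)
    have "q * (-(a - q/2) + 2*c/q^2) = -(q*m) + q*(2*c/q^2)" unfolding m_def mq_def by (simp add: algebra_simps)
    also have "\<dots> = -N" unfolding c1 N_def by simp
    finally have "q * (-(a - q/2) + 2*c/q^2) = -N" .
    moreover have "q*dw = (q * (-(a - q/2) + 2*c/q^2)) / (2*w)" unfolding dw_def by simp
    ultimately show ?thesis by simp
  qed
  have "q*(-1/2 - dw*r) - x = -q/2 - r*(q*dw) - x" by (simp add: algebra_simps)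
  then have e1: "q*(-1/2 - dw*r) - x = -(x + q/2 - r*N/(2*w))" unfolding qdw by simp
  have "q*(-1/2 + dw*r) - y = -q/2 + r*(q*dw) - y" by (simp add: algebra_simps)
  then have e2: "q*(-1/2 + dw*r) - y = -(y + q/2 + r*N/(2*w))" unfolding qdw by simp
  have K: "phiq q x * (x + q/2 - r*N/(2*w)) + phiq q y * (y + q/2 + r*N/(2*w)) > 0"
    using key_ineq[OF w0 r mw] unfolding x_def y_def N_def .
  have gen: "\<And>X Y px py::real. px*X + py*Y > 0 \<Longrightarrow> (-X)*px/2 + (-Y)*py/2 < 0"
    by (simp add: algebra_simps)
  show ?thesis
    apply (rule exI, rule conjI, rule H)
    unfolding e1 e2 using gen[OF K] .
qed

lemma validq_iff:
  assumes q: "0 < q" and c: "0 < c"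
  shows "validq a c q \<longleftrightarrow> q*(a - q/2)^2 > 2*c \<and> a - q/2 > 0 \<and> 3*q/2 - a > 0 \<and> q^2*(q-a) + c > 0"
proof -
  let ?m = "a - q/2"
  have D: "Dq a c q > 0 \<longleftrightarrow> q*(a - q/2)^2 > 2*c"
    unfolding Dq_def using q by (simp add: field_simps)
  show ?thesis
  proof
    assume v: "validq a c q"
    then have D0: "Dq a c q > 0" and mw: "0 < mq a q - wq a c q" "mq a q + wq a c q < q"
      unfolding validq_def by auto
    have w0: "wq a c q > 0" unfolding wq_def using D0 by simp
    have w2: "(wq a c q)^2 = ?m^2 - 2*c/q" using real_sqrt_pow2[OF less_imp_le[OF D0]] unfolding wq_def Dq_def by simp
    have m0: "?m > 0" using mw w0 unfolding mq_def by simp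
    have qm: "q - ?m > 0" using mw w0 unfolding mq_def by simp
    have "(wq a c q)^2 < (q - ?m)^2" using mw w0 unfolding mq_def
      by (intro power_strict_mono) auto
    then have "?m^2 - 2*c/q < (q - ?m)^2" using w2 by simp
    then have "2*c/q + 2*q*(q - a) > 0" by (simp add: power2_eq_square algebra_simps)
    then have "(2*c/q + 2*q*(q-a)) * (q/2) > 0" using q by simp
    moreover have "(2*c/q + 2*q*(q-a)) * (q/2) = q^2*(q-a) + c" using q by (simp add: field_simps power2_eq_square)
    ultimately have "q^2*(q-a) + c > 0" by simp
    then show "q*(a - q/2)^2 > 2*c \<and> a - q/2 > 0 \<and> 3*q/2 - a > 0 \<and> q^2*(q-a) + c > 0"
      using D D0 m0 qm by simp
  next
    assume h: "q*(a - q/2)^2 > 2*c \<and> a - q/2 > 0 \<and> 3*q/2 - a > 0 \<and> q^2*(q-a) + c > 0"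
    then have D0: "Dq a c q > 0" using D by simp
    have w0: "wq a c q \<ge> 0" unfolding wq_def using D0 by simp
    have w2: "(wq a c q)^2 = ?m^2 - 2*c/q" using real_sqrt_pow2[OF less_imp_le[OF D0]] unfolding wq_def Dq_def by simp
    have m0: "?m > 0" using h by simp
    have "(wq a c q)^2 < ?m^2" using w2 c q by simp
    then have wm: "wq a c q < ?m" using m0 w0 by (meson power_less_imp_less_base less_imp_le)
    have "2*c/q + 2*q*(q-a) > 0"
    proof -
      have "(q^2*(q-a) + c) * (2/q) > 0" using h q by simp
      then show ?thesis using q by (simp add: field_simps power2_eq_square)
    qed
    then have "(wq a c q)^2 < (q - ?m)^2" using w2 by (simp add: power2_eq_square algebra_simps)
    moreover have "q - ?m \<ge> 0" using h by simp
    ultimately have "wq a c q < q - ?m" by (rule power_less_imp_less_base)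
    then show "validq a c q" unfolding validq_def mq_def using q D0 wm by simp
  qed
qed

lemma j_decr:
  fixes a q1 q2 :: real
  assumes "2*a/3 < q1" "q1 \<le> q2" "q2 < 2*a"
  shows "q2*(a - q2/2)^2 \<le> q1*(a - q1/2)^2"
proof (cases "q1 = q2")
  case False
  then have lt: "q1 < q2" using assms by simp
  show ?thesis
  proof (rule less_imp_le, rule DERIV_neg_imp_decreasing[OF lt])
    fix x assume x: "q1 \<le> x" "x \<le> q2"
    show "\<exists>y. ((\<lambda>q. q*(a - q/2)^2) has_real_derivative y) (at x) \<and> y < 0"
    proof (intro exI conjI)
      show "((\<lambda>q. q*(a - q/2)^2) has_real_derivative (a - x/2)*(a - 3*x/2)) (at x)"
        by (auto intro!: derivative_eq_intros simp: power2_eq_square field_simps)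
      have "a - x/2 > 0" "a - 3*x/2 < 0" using x assms by auto
      then show "(a - x/2)*(a - 3*x/2) < 0" by (simp add: mult_pos_neg)
    qed
  qed
qed simp

lemma h_incr:
  fixes a q1 q2 :: real
  assumes "2*a/3 < q1" "q1 \<le> q2" "0 < q1"
  shows "q1^2*(q1-a) \<le> q2^2*(q2-a)"
proof (cases "q1 = q2")
  case False
  then have lt: "q1 < q2" using assms by simp
  show ?thesis
  proof (rule less_imp_le, rule DERIV_pos_imp_increasing[OF lt])
    fix x assume x: "q1 \<le> x" "x \<le> q2"
    show "\<exists>y. ((\<lambda>q. q^2*(q-a)) has_real_derivative y) (at x) \<and> y > 0"
    proof (intro exI conjI)
      show "((\<lambda>q. q^2*(q-a)) has_real_derivative x*(3*x - 2*a)) (at x)"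
        by (auto intro!: derivative_eq_intros simp: power2_eq_square algebra_simps)
      have "x > 0" "3*x - 2*a > 0" using x assms by auto
      then show "x*(3*x - 2*a) > 0" by simp
    qed
  qed
qed simp

lemma validq_between:
  assumes c: "0 < c" and v1: "validq a c q1" and v2: "validq a c q2" and q: "q1 \<le> q" "q \<le> q2"
  shows "validq a c q"
proof -
  have q1: "0 < q1" using v1 unfolding validq_def by simp
  have q2: "0 < q2" using v2 unfolding validq_def by simp
  have h1: "q1*(a - q1/2)^2 > 2*c \<and> a - q1/2 > 0 \<and> 3*q1/2 - a > 0 \<and> q1^2*(q1-a) + c > 0"
    using v1 validq_iff[OF q1 c] by simp
  have h2: "q2*(a - q2/2)^2 > 2*c \<and> a - q2/2 > 0 \<and> 3*q2/2 - a > 0 \<and> q2^2*(q2-a) + c > 0"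
    using v2 validq_iff[OF q2 c] by simp
  have q0: "0 < q" using q q1 by simp
  have "q2*(a - q2/2)^2 \<le> q*(a - q/2)^2" using j_decr[of a q q2] h1 h2 q by simp
  moreover have "q1^2*(q1-a) \<le> q^2*(q-a)" using h_incr[of a q1 q] h1 q q1 by simp
  ultimately show ?thesis using validq_iff[OF q0 c] h1 h2 q by auto
qed

lemma Hq_sym: "Hq a c (-r) q = Hq a c r q"
  unfolding Hq_def by simp

lemma Hq_decr:
  assumes c: "0 < c" and v1: "validq a c q1" and v2: "validq a c q2" and lt: "q1 < q2"
    and r: "\<bar>r\<bar> \<le> 1"
  shows "Hq a c r q2 < Hq a c r q1"
proof -
  have "Hq a c \<bar>r\<bar> q2 < Hq a c \<bar>r\<bar> q1"
  proof (rule DERIV_neg_imp_decreasing[OF lt])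
    fix x assume "q1 \<le> x" "x \<le> q2"
    then have "validq a c x" using validq_between[OF c v1 v2] by simp
    then show "\<exists>y. (Hq a c \<bar>r\<bar> has_real_derivative y) (at x) \<and> y < 0"
      using Hq_deriv_neg r by simp
  qed
  then show ?thesis by (cases "r \<ge> 0") (auto simp: Hq_sym)
qed

definition triple :: "real \<Rightarrow> real \<Rightarrow> real \<Rightarrow> real \<Rightarrow> real \<Rightarrow> bool" where
  "triple a c p1 p2 p3 \<longleftrightarrow> 0 < p1 \<and> p1 < p2 \<and> p2 < p3 \<and> p1 + p2 + p3 = 2*a \<and> p1*p2*p3 = 2*c"

definition Gint :: "real \<Rightarrow> real \<Rightarrow> real \<Rightarrow> real \<Rightarrow> real" where
  "Gint p1 p2 p3 t = Fq p3 ((p1+p2)/2 - (p2-p1)/2 * cos t)"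

lemma triple_props:
  assumes "triple a c p1 p2 p3"
  shows "mq a p3 = (p1+p2)/2" "wq a c p3 = (p2-p1)/2" "validq a c p3"
proof -
  have t: "0 < p1" "p1 < p2" "p2 < p3" "p1 + p2 + p3 = 2*a" "p1*p2*p3 = 2*c"
    using assms unfolding triple_def by auto
  show m: "mq a p3 = (p1+p2)/2" unfolding mq_def using t by simp
  have c2: "2*c/p3 = p1*p2" using t by (simp add: field_simps)
  have am: "a - p3/2 = (p1+p2)/2" using t by simp
  have "Dq a c p3 = ((p1+p2)/2)^2 - p1*p2" unfolding Dq_def am c2 ..
  also have "\<dots> = ((p2-p1)/2)^2" by (simp add: power2_eq_square field_simps)
  finally have "Dq a c p3 = ((p2-p1)/2)^2" .
  then show w: "wq a c p3 = (p2-p1)/2" unfolding wq_def using t by simp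
  have "Dq a c p3 > 0" using \<open>Dq a c p3 = ((p2-p1)/2)^2\<close> t by simp
  moreover have "(p1+p2)/2 + (p2-p1)/2 = p2" "(p1+p2)/2 - (p2-p1)/2 = p1" by (simp_all add: field_simps)
  ultimately show "validq a c p3" unfolding validq_def m w using t by simp
qed

lemma Gint_cont:
  assumes "triple a c p1 p2 p3"
  shows "continuous_on UNIV (Gint p1 p2 p3)"
proof -
  have t: "0 < p1" "p1 < p2" "p2 < p3"
    using assms unfolding triple_def by auto
  have ne: "p3 - ((p1+p2)/2 - (p2-p1)/2 * cos x) \<noteq> 0" for x
  proof -
    have "(p2-p1)/2 * cos x \<ge> (p2-p1)/2 * (-1)"
      using t cos_ge_minus_one[of x] by (intro mult_left_mono) auto
    moreover have "(p1+p2)/2 + (p2-p1)/2 = p2" by (simp add: field_simps)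
    ultimately have "(p1+p2)/2 - (p2-p1)/2 * cos x \<le> p2" by linarith
    then show ?thesis using t by simp
  qed
  show ?thesis unfolding Gint_def[abs_def] Fq_def
    using ne by (auto intro!: continuous_intros)
qed

lemma Gint_refl_cont:
  assumes "triple a c p1 p2 p3"
  shows "continuous_on S (\<lambda>t. Gint p1 p2 p3 (pi - t))"
proof -
  have "continuous_on UNIV (\<lambda>t. Gint p1 p2 p3 (pi - t))"
    by (rule continuous_on_compose2[OF Gint_cont[OF assms]]) (auto intro!: continuous_intros)
  then show ?thesis by (rule continuous_on_subset) simp
qed

lemma Gint_reflect:
  "integral {0..pi} (\<lambda>t. Gint p1 p2 p3 (pi - t)) = integral {0..pi} (Gint p1 p2 p3)"
proof -
  have "integral {-0..-(-pi)} (\<lambda>x. (\<lambda>s. Gint p1 p2 p3 (pi + s)) (-x)) = integral {-pi..0} (\<lambda>s. Gint p1 p2 p3 (pi + s))"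
    by (rule Henstock_Kurzweil_Integration.integral_reflect_real[where a="-pi" and b=0 and f="\<lambda>s. Gint p1 p2 p3 (pi + s)"])
  moreover have "(\<lambda>x. (\<lambda>s. Gint p1 p2 p3 (pi + s)) (-x)) = (\<lambda>t. Gint p1 p2 p3 (pi - t))" by (simp add: fun_eq_iff)
  moreover have "{-0..-(-pi)} = {0..pi::real}" by simp
  ultimately have "integral {0..pi} (\<lambda>t. Gint p1 p2 p3 (pi - t)) = integral {-pi..0} (\<lambda>s. Gint p1 p2 p3 (pi + s))"
    by simp
  also have "\<dots> = integral {0..pi} (Gint p1 p2 p3)"
    using integral_shift_Icc_real[of "-pi" 0 "Gint p1 p2 p3" pi] by (simp add: o_def add.commute)
  finally show ?thesis .
qed

lemma Gint_sum:
  assumes "triple a c p1 p2 p3"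
  shows "Gint p1 p2 p3 t + Gint p1 p2 p3 (pi - t) = Hq a c (cos t) p3"
proof -
  have "(p1+p2)/2 - (p2-p1)/2 * cos (pi - t) = (p1+p2)/2 + (p2-p1)/2 * cos t" by simp
  then show ?thesis unfolding Gint_def Hq_def triple_props[OF assms] by simp
qed

lemma compare:
  assumes c: "0 < c" and T: "triple a c p1 p2 p3" and T': "triple a c p1' p2' p3'" and lt: "p3' < p3"
  shows "integral {0..pi} (Gint p1 p2 p3) < integral {0..pi} (Gint p1' p2' p3')"
proof -
  have ct: "continuous_on {0..pi} (\<lambda>t. Gint p1 p2 p3 t + Gint p1 p2 p3 (pi - t))"
    using Gint_cont[OF T] Gint_refl_cont[OF T] by (intro continuous_on_add) (auto elim: continuous_on_subset)
  have ct': "continuous_on {0..pi} (\<lambda>t. Gint p1' p2' p3' t + Gint p1' p2' p3' (pi - t))"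
    using Gint_cont[OF T'] Gint_refl_cont[OF T'] by (intro continuous_on_add) (auto elim: continuous_on_subset)
  have i1: "Gint p1 p2 p3 integrable_on {0..pi}"
    using Gint_cont[OF T] by (auto intro: integrable_continuous_real continuous_on_subset)
  have i2: "(\<lambda>t. Gint p1 p2 p3 (pi - t)) integrable_on {0..pi}"
    by (rule integrable_continuous_real, rule Gint_refl_cont[OF T])
  have i1': "Gint p1' p2' p3' integrable_on {0..pi}"
    using Gint_cont[OF T'] by (auto intro: integrable_continuous_real continuous_on_subset)
  have i2': "(\<lambda>t. Gint p1' p2' p3' (pi - t)) integrable_on {0..pi}"
    by (rule integrable_continuous_real, rule Gint_refl_cont[OF T'])
  have e1: "2 * integral {0..pi} (Gint p1 p2 p3) = integral {0..pi} (\<lambda>t. Gint p1 p2 p3 t + Gint p1 p2 p3 (pi - t))"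
    using integral_add[OF i1 i2] Gint_reflect[of p1 p2 p3] by simp
  have e2: "2 * integral {0..pi} (Gint p1' p2' p3') = integral {0..pi} (\<lambda>t. Gint p1' p2' p3' t + Gint p1' p2' p3' (pi - t))"
    using integral_add[OF i1' i2'] Gint_reflect[of p1' p2' p3'] by simp
  have "integral {0..pi} (\<lambda>t. Gint p1 p2 p3 t + Gint p1 p2 p3 (pi - t))
      < integral {0..pi} (\<lambda>t. Gint p1' p2' p3' t + Gint p1' p2' p3' (pi - t))"
  proof (rule integral_less_real[OF ct ct'])
    have "pi/2 \<in> {0<..<pi}" using pi_gt_zero by simp
    then show "{0<..<pi} \<noteq> {}" by blast
    fix t assume "t \<in> {0<..<pi}"
    have "\<bar>cos t\<bar> \<le> 1" by (rule abs_cos_le_one)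
    then have "Hq a c (cos t) p3 < Hq a c (cos t) p3'"
      using Hq_decr[OF c triple_props(3)[OF T'] triple_props(3)[OF T] lt] by simp
    then show "Gint p1 p2 p3 t + Gint p1 p2 p3 (pi - t) < Gint p1' p2' p3' t + Gint p1' p2' p3' (pi - t)"
      unfolding Gint_sum[OF T] Gint_sum[OF T'] .
  qed
  then show ?thesis using e1 e2 by simp
qed

lemma period_subst:
  fixes f :: "real \<Rightarrow> real"
  assumes T: "0 < p1" "p1 < p2" "p2 < p3"
    and f: "\<And>x. x \<in> {C1-p2<..<C1-p1} \<Longrightarrow>
       f x = 1 / sqrt (((C1-x)-p1)*(p2-(C1-x))*(p3-(C1-x))/(C1-x))"
    and Gc: "continuous_on UNIV (Gint p1 p2 p3)"
  shows "(f has_integral integral {0..pi} (Gint p1 p2 p3)) {C1-p2..C1-p1}"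
proof -
  define m where "m = (p1+p2)/2"
  define w where "w = (p2-p1)/2"
  have w0: "w > 0" using T by (simp add: w_def)
  define u where "u x = (x - C1 + m)/w" for x
  define Phi where "Phi t = integral {0..t} (Gint p1 p2 p3)" for t
  define G where "G x = - Phi (arccos (u x))" for x
  have Gc0: "continuous_on {0..pi} (Gint p1 p2 p3)" using Gc by (rule continuous_on_subset) simp
  have dPhi: "(Phi has_real_derivative Gint p1 p2 p3 t) (at t within {0..pi})" if "t \<in> {0..pi}" for t
    unfolding Phi_def[abs_def] by (rule integral_has_real_derivative[OF Gc0 that])
  have cPhi: "continuous_on {0..pi} Phi"
    using dPhi DERIV_continuous continuous_on_eq_continuous_within by blast
  have u_range: "-1 \<le> u x \<and> u x \<le> 1" if "x \<in> {C1-p2..C1-p1}" for x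
    using that w0 unfolding u_def m_def w_def by (auto simp: field_simps)
  have u_range': "-1 < u x \<and> u x < 1" if "x \<in> {C1-p2<..<C1-p1}" for x
    using that w0 unfolding u_def m_def w_def by (auto simp: field_simps)
  have cG: "continuous_on {C1-p2..C1-p1} G"
  proof -
    have "continuous_on {C1-p2..C1-p1} (\<lambda>x. arccos (u x))"
      using u_range w0 unfolding u_def by (auto intro!: continuous_intros)
    moreover have "(\<lambda>x. arccos (u x)) ` {C1-p2..C1-p1} \<subseteq> {0..pi}"
      using u_range arccos_bounded by auto
    ultimately have "continuous_on {C1-p2..C1-p1} (\<lambda>x. Phi (arccos (u x)))"
      by (rule continuous_on_compose2[OF cPhi])
    then show ?thesis unfolding G_def by (intro continuous_intros)
  qed
  have dG: "(G has_real_derivative f x) (at x)" if x: "x \<in> {C1-p2<..<C1-p1}" for x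
  proof -
    have ur: "-1 < u x" "u x < 1" using u_range'[OF x] by auto
    have tr: "0 < arccos (u x)" "arccos (u x) < pi" using arccos_lt_bounded[OF ur] by auto
    have dPhi': "(Phi has_real_derivative Gint p1 p2 p3 (arccos (u x))) (at (arccos (u x)))"
    proof -
      have "(Phi has_real_derivative Gint p1 p2 p3 (arccos (u x))) (at (arccos (u x)) within {0..pi})"
        using dPhi tr by simp
      moreover have "arccos (u x) \<in> interior {0..pi}" using tr by simp
      ultimately show ?thesis using at_within_interior by metis
    qed
    have du: "(u has_real_derivative 1/w) (at x)"
      unfolding u_def[abs_def] using w0 by (auto intro!: derivative_eq_intros)
    have dA: "((\<lambda>x. arccos (u x)) has_real_derivative inverse (- sqrt (1 - (u x)^2)) * (1/w)) (at x)"
      by (rule DERIV_chain2[OF DERIV_arccos[OF ur] du])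
    have dG0: "(G has_real_derivative - (Gint p1 p2 p3 (arccos (u x)) * (inverse (- sqrt (1 - (u x)^2)) * (1/w)))) (at x)"
      unfolding G_def[abs_def] by (rule DERIV_minus, rule DERIV_chain2[OF dPhi' dA])
    define psi where "psi = C1 - x"
    have psi: "p1 < psi" "psi < p2" using x unfolding psi_def by auto
    have wu: "w * u x = m - psi" unfolding u_def psi_def using w0 by (simp add: field_simps)
    have Gv: "Gint p1 p2 p3 (arccos (u x)) = sqrt (psi/(p3 - psi))"
    proof -
      have "(p1+p2)/2 - (p2-p1)/2 * cos (arccos (u x)) = m - w * u x"
        using ur unfolding m_def w_def by simp
      also have "\<dots> = psi" using wu by simp
      finally show ?thesis unfolding Gint_def Fq_def by simp
    qed
    have sq: "w * sqrt (1 - (u x)^2) = sqrt ((psi - p1)*(p2 - psi))"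
    proof -
      have "w * sqrt (1 - (u x)^2) = sqrt (w^2 * (1 - (u x)^2))"
        using w0 by (simp add: real_sqrt_mult)
      also have "w^2 * (1 - (u x)^2) = w^2 - (w * u x)^2" by (simp add: algebra_simps power_mult_distrib)
      also have "\<dots> = w^2 - (m - psi)^2" unfolding wu ..
      also have "\<dots> = (psi - p1)*(p2 - psi)" unfolding m_def w_def
        by (simp add: power2_eq_square field_simps)
      finally show ?thesis .
    qed
    have pos1: "sqrt (1 - (u x)^2) > 0"
    proof -
      have "(u x)^2 < 1" using ur by (simp add: abs_square_less_1)
      then show ?thesis by simp
    qed
    have "- (Gint p1 p2 p3 (arccos (u x)) * (inverse (- sqrt (1 - (u x)^2)) * (1/w)))
        = sqrt (psi/(p3 - psi)) / (w * sqrt (1 - (u x)^2))"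
      unfolding Gv using w0 pos1 by (simp add: field_simps)
    also have "\<dots> = sqrt (psi/(p3 - psi)) / sqrt ((psi - p1)*(p2 - psi))" unfolding sq ..
    also have "\<dots> = 1 / sqrt ((psi-p1)*(p2-psi)*(p3-psi)/psi)"
    proof -
      have "(psi-p1)*(p2-psi)*(p3-psi)/psi = ((psi - p1)*(p2 - psi)) / (psi/(p3 - psi))"
        using psi T by (simp add: field_simps)
      then show ?thesis by (simp add: real_sqrt_divide real_sqrt_mult ac_simps)
    qed
    also have "\<dots> = f x" using f[OF x] unfolding psi_def by simp
    finally show ?thesis using dG0 by simp
  qed
  have "(f has_integral (G (C1-p1) - G (C1-p2))) {C1-p2..C1-p1}"
    apply (rule fundamental_theorem_of_calculus_interior)
    using T apply simp
     apply (rule cG)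
    using dG by (simp add: has_real_derivative_iff_has_vector_derivative)
  moreover have "G (C1-p1) = 0"
  proof -
    have "u (C1-p1) = 1" unfolding u_def m_def w_def using T by (simp add: field_simps)
    then show ?thesis unfolding G_def Phi_def by simp
  qed
  moreover have "G (C1-p2) = - integral {0..pi} (Gint p1 p2 p3)"
  proof -
    have "u (C1-p2) = -1" unfolding u_def m_def w_def using T by (simp add: field_simps)
    then show ?thesis unfolding G_def Phi_def by simp
  qed
  ultimately show ?thesis by simp
qed

lemma vieta3:
  fixes p1 p2 p3 A B C :: real
  assumes d: "p1 \<noteq> p2" "p1 \<noteq> p3" "p2 \<noteq> p3"
    and r: "p1^3 - A*p1^2 + B*p1 - C = 0" "p2^3 - A*p2^2 + B*p2 - C = 0" "p3^3 - A*p3^2 + B*p3 - C = 0"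
  shows "p1 + p2 + p3 = A" "p1*p2*p3 = C" "\<And>x. x^3 - A*x^2 + B*x - C = (x-p1)*(x-p2)*(x-p3)"
proof -
  define R12 where "R12 = p1^2 + p1*p2 + p2^2 - A*(p1+p2) + B"
  define R13 where "R13 = p1^2 + p1*p3 + p3^2 - A*(p1+p3) + B"
  have "(p1 - p2) * R12 = (p1^3 - A*p1^2 + B*p1 - C) - (p2^3 - A*p2^2 + B*p2 - C)"
    unfolding R12_def by (simp add: algebra_simps power2_eq_square power3_eq_cube)
  then have R12: "R12 = 0" using r d by simp
  have "(p1 - p3) * R13 = (p1^3 - A*p1^2 + B*p1 - C) - (p3^3 - A*p3^2 + B*p3 - C)"
    unfolding R13_def by (simp add: algebra_simps power2_eq_square power3_eq_cube)
  then have R13: "R13 = 0" using r d by simp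
  have "(p2 - p3) * (p1 + p2 + p3 - A) = R12 - R13"
    unfolding R12_def R13_def by (simp add: algebra_simps power2_eq_square)
  then show s: "p1 + p2 + p3 = A" using R12 R13 d by simp
  have B: "B = p1*p2 + p1*p3 + p2*p3"
  proof -
    have "B = A*(p1+p2) - (p1^2 + p1*p2 + p2^2)" using R12 unfolding R12_def by simp
    also have "\<dots> = p1*p2 + p1*p3 + p2*p3" unfolding s[symmetric] by (simp add: algebra_simps power2_eq_square)
    finally show ?thesis .
  qed
  show C: "p1*p2*p3 = C"
  proof -
    have "C = p1^3 - A*p1^2 + B*p1" using r(1) by simp
    also have "\<dots> = p1*p2*p3" unfolding s[symmetric] B by (simp add: algebra_simps power2_eq_square power3_eq_cube)
    finally show ?thesis by simp
  qed
  fix x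
  show "x^3 - A*x^2 + B*x - C = (x-p1)*(x-p2)*(x-p3)"
    unfolding s[symmetric] B C[symmetric] by (simp add: algebra_simps power2_eq_square power3_eq_cube)
qed

definition Vf :: "real \<Rightarrow> real \<Rightarrow> real \<Rightarrow> real" where
  "Vf a c p = - (p^2)/2 + a*p + c/p"

lemma crit_points:
  fixes a c :: real
  assumes a: "0 < a" and c: "0 < c" and cc: "27*c < 4*a^3"
  shows "\<exists>pa pb. 0 < pa \<and> pa < 2*a/3 \<and> 2*a/3 < pb \<and> pb < a \<and> pa^2*(a-pa) = c \<and> pb^2*(a-pb) = c"
proof -
  define g where "g p = p^2*(a-p)" for p :: real
  have cg: "continuous_on S g" for S unfolding g_def by (intro continuous_intros)
  have g0: "g 0 = 0" and ga: "g a = 0" unfolding g_def by simp_all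
  have gm: "g (2*a/3) = 4*a^3/27" unfolding g_def by (simp add: power2_eq_square power3_eq_cube field_simps)
  obtain pa where pa: "0 \<le> pa" "pa \<le> 2*a/3" "g pa = c"
    using IVT'[of g 0 c "2*a/3"] g0 gm c cc a cg by force
  obtain pb where pb: "2*a/3 \<le> pb" "pb \<le> a" "g pb = c"
    using IVT2'[of g a c "2*a/3"] ga gm c cc a cg by force
  have "pa \<noteq> 0" using pa g0 c by auto
  moreover have "pa \<noteq> 2*a/3"
  proof
    assume h: "pa = 2*a/3"
    have "c = g pa" using pa(3) by simp
    then have "c = g (2*a/3)" unfolding h .
    then have "c = 4*a^3/27" using gm by simp
    then show False using cc by simp
  qed
  moreover have "pb \<noteq> 2*a/3"
  proof
    assume h: "pb = 2*a/3"
    have "c = g pb" using pb(3) by simp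
    then have "c = g (2*a/3)" unfolding h .
    then have "c = 4*a^3/27" using gm by simp
    then show False using cc by simp
  qed
  moreover have "pb \<noteq> a" using pb ga c by auto
  ultimately show ?thesis using pa pb unfolding g_def by (intro exI[of _ pa] exI[of _ pb]) auto
qed

lemma roots_for_b:
  fixes a c pa pb beta :: real
  assumes a: "0 < a" and c: "0 < c"
    and pa: "0 < pa" "pa < pb" "pb < a"
    and b: "Vf a c pa < beta" "beta < Vf a c pb"
  shows "\<exists>p1 p2 p3. 0 < p1 \<and> p1 < pa \<and> pa < p2 \<and> p2 < pb \<and> pb < p3 \<and>
     (\<forall>x. x^3 - (2*a)*x^2 + (2*beta)*x - 2*c = (x-p1)*(x-p2)*(x-p3)) \<and> triple a c p1 p2 p3"
proof -
  define P where "P x = x^3 - (2*a)*x^2 + (2*beta)*x - 2*c" for x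
  have cP: "continuous_on S P" for S unfolding P_def by (intro continuous_intros)
  have PV: "P x = 2*x*(beta - Vf a c x)" if "x \<noteq> 0" for x
    unfolding P_def Vf_def using that by (simp add: field_simps power2_eq_square power3_eq_cube)
  have Vpa: "Vf a c pa > 0"
  proof -
    have "a*pa - pa^2/2 > 0" using pa by (simp add: power2_eq_square field_simps)
    moreover have "c/pa > 0" using c pa by simp
    ultimately show ?thesis unfolding Vf_def by simp
  qed
  have beta0: "beta > 0" using Vpa b by simp
  have P0: "P 0 < 0" unfolding P_def using c by simp
  have Ppa: "P pa > 0" using PV[of pa] pa b by simp
  have Ppb: "P pb < 0" using PV[of pb] pa b by (simp add: mult_pos_neg)
  define X where "X = 2*a + c/beta + 1"
  have PX: "P X > 0"
  proof -
    have cb: "c/beta > 0" using c beta0 by simp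
    have X2: "X - 2*a > 0" "X > 0" unfolding X_def using a cb by auto
    have "X^2*(X - 2*a) \<ge> 0" using X2 by simp
    moreover have "2*beta*X - 2*c > 0"
    proof -
      have "X > c/beta" unfolding X_def using a by simp
      then have "beta*X > c" using beta0 by (simp add: field_simps)
      then show ?thesis by simp
    qed
    moreover have "P X = X^2*(X - 2*a) + (2*beta*X - 2*c)" unfolding P_def
      by (simp add: power2_eq_square power3_eq_cube algebra_simps)
    ultimately show ?thesis by simp
  qed
  have pbX: "pb < X"
  proof -
    have "c/beta > 0" using c beta0 by simp
    then show ?thesis unfolding X_def using pa a by linarith
  qed
  obtain p1 where p1: "0 \<le> p1" "p1 \<le> pa" "P p1 = 0"
    using IVT'[of P 0 0 pa] P0 Ppa pa cP by force
  obtain p2 where p2: "pa \<le> p2" "p2 \<le> pb" "P p2 = 0"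
    using IVT2'[of P pb 0 pa] Ppa Ppb pa cP by force
  obtain p3 where p3: "pb \<le> p3" "p3 \<le> X" "P p3 = 0"
    using IVT'[of P pb 0 X] Ppb PX pbX cP by force
  have p1': "0 < p1" "p1 < pa" using p1 P0 Ppa by (auto simp: order.order_iff_strict)
  have p2': "pa < p2" "p2 < pb" using p2 Ppb Ppa by (auto simp: order.order_iff_strict)
  have p3': "pb < p3" using p3 Ppb by (auto simp: order.order_iff_strict)
  have d: "p1 \<noteq> p2" "p1 \<noteq> p3" "p2 \<noteq> p3" using p1' p2' p3' by auto
  have r: "p1^3 - (2*a)*p1^2 + (2*beta)*p1 - 2*c = 0" "p2^3 - (2*a)*p2^2 + (2*beta)*p2 - 2*c = 0"
      "p3^3 - (2*a)*p3^2 + (2*beta)*p3 - 2*c = 0"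
    using p1 p2 p3 unfolding P_def by auto
  note V = vieta3[OF d r]
  have "triple a c p1 p2 p3" unfolding triple_def using p1' p2' p3' V(1,2) by auto
  then show ?thesis using p1' p2' p3' V(3) by blast
qed

theorem lemma4:
  fixes C1 C2 C3 :: real
  assumes "C2 > 0" and "C1 \<le> 0" and "2*C1 + C2 > 0"
    and "0 < C3" and "C3 < C3crit C1 C2"
  shows "strict_mono_on {b_minus C1 C2 C3 <..< b_plus C1 C2 C3} (period_L C1 C2 C3)"
proof -
  define a where "a = C1 + C2/2"
  define c where "c = C3/2"
  define K where "K = - (C1^2)/2 - C1*C2"
  have a0: "0 < a" unfolding a_def using assms by simp
  have c0: "0 < c" unfolding c_def using assms by simp
  have cc: "27*c < 4*a^3"
  proof -
    have "2*C1 + C2 = 2*a" unfolding a_def by simp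
    then have "C3crit C1 C2 = 8*a^3/27" unfolding C3crit_def by (simp add: power3_eq_cube)
    then show ?thesis using assms(5) unfolding c_def by simp
  qed
  have Ueq: "U C1 C2 C3 x = Vf a c (C1 - x) + K" if "x \<noteq> C1" for x
  proof -
    have "x - C1 \<noteq> 0" "C1 - x \<noteq> 0" using that by auto
    then show ?thesis unfolding U_def Vf_def a_def c_def K_def
      by (simp add: field_simps power2_eq_square)
  qed
  obtain pa pb where crit: "0 < pa" "pa < 2*a/3" "2*a/3 < pb" "pb < a" "pa^2*(a-pa) = c" "pb^2*(a-pb) = c"
    using crit_points[OF a0 c0 cc] by blast
  define pn where "pn = a - pa - pb"
  have key: "a*(pa+pb) = pa^2 + pa*pb + pb^2"
  proof -
    have "(pa - pb) * (a*(pa+pb) - (pa^2 + pa*pb + pb^2)) = pa^2*(a-pa) - pb^2*(a-pb)"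
      by (simp add: algebra_simps power2_eq_square)
    then have "(pa - pb) * (a*(pa+pb) - (pa^2 + pa*pb + pb^2)) = 0" using crit by simp
    moreover have "pa - pb \<noteq> 0" using crit by simp
    ultimately show ?thesis by simp
  qed
  have pn0: "pn < 0"
  proof -
    have "(pa+pb)^2 > pa^2 + pa*pb + pb^2" using crit by (simp add: power2_eq_square algebra_simps)
    then have "(pa+pb)*(pa+pb) > a*(pa+pb)" using key by (simp add: power2_eq_square)
    then have "pa+pb > a" using crit by (simp add: mult_less_cancel_right)
    then show ?thesis unfolding pn_def by simp
  qed
  have fact: "p^2*(a-p) - c = -((p-pa)*(p-pb)*(p-pn))" for p
  proof -
    have "p^2*(a-p) - c + (p-pa)*(p-pb)*(p-pn) = (p - pa)*(a*(pa+pb) - (pa^2 + pa*pb + pb^2))"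
      unfolding pn_def crit(5)[symmetric] by (simp add: algebra_simps power2_eq_square)
    then show ?thesis using key by simp
  qed
  have roots: "cubic_roots C1 C2 C3 = {C1-pa, C1-pb, C1-pn}"
  proof -
    have eqp: "2*(x - C1)^2*(x + C2/2) - C3 = 2*((C1-x)^2*(a-(C1-x)) - c)" for x
      unfolding a_def c_def by (simp add: power2_eq_square algebra_simps)
    have "2*(x - C1)^2*(x + C2/2) = C3 \<longleftrightarrow> (C1-x)^2*(a-(C1-x)) - c = 0" for x
      using eqp[of x] by (smt (verit))
    moreover have "(C1-x)^2*(a-(C1-x)) - c = 0 \<longleftrightarrow> x \<in> {C1-pa, C1-pb, C1-pn}" for x
    proof -
      have "(C1-x)^2*(a-(C1-x)) - c = 0 \<longleftrightarrow> (C1-x-pa)*(C1-x-pb)*(C1-x-pn) = 0"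
        unfolding fact by simp
      also have "\<dots> \<longleftrightarrow> x \<in> {C1-pa, C1-pb, C1-pn}" by auto
      finally show ?thesis .
    qed
    ultimately have "2*(x - C1)^2*(x + C2/2) = C3 \<longleftrightarrow> x \<in> {C1-pa, C1-pb, C1-pn}" for x
      by blast
    then show ?thesis unfolding cubic_roots_def by auto
  qed
  have ph1: "phi1 C1 C2 C3 = C1 - pb"
    unfolding phi1_def roots using crit pn0 by (intro Min_eqI) auto
  have ph2: "phi2 C1 C2 C3 = C1 - pa"
    unfolding phi2_def ph1 roots using crit pn0 by (intro Min_eqI) auto
  have bm: "b_minus C1 C2 C3 = Vf a c pa + K" unfolding b_minus_def ph2 using Ueq[of "C1-pa"] crit by simp
  have bp: "b_plus C1 C2 C3 = Vf a c pb + K" unfolding b_plus_def ph1 using Ueq[of "C1-pb"] crit by simp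
  have per: "\<exists>p1 p2 p3. triple a c p1 p2 p3 \<and> period_L C1 C2 C3 b = 2 * integral {0..pi} (Gint p1 p2 p3)
      \<and> (\<forall>x. x^3 - (2*a)*x^2 + (2*(b-K))*x - 2*c = (x-p1)*(x-p2)*(x-p3))"
    if b: "b \<in> {b_minus C1 C2 C3 <..< b_plus C1 C2 C3}" for b
  proof -
    have bb: "Vf a c pa < b - K" "b - K < Vf a c pb" using b bm bp by auto
    obtain p1 p2 p3 where P: "0 < p1" "p1 < pa" "pa < p2" "p2 < pb" "pb < p3"
      and fac: "\<And>x. x^3 - (2*a)*x^2 + (2*(b-K))*x - 2*c = (x-p1)*(x-p2)*(x-p3)"
      and T: "triple a c p1 p2 p3"
      using roots_for_b[OF a0 c0 crit(1) _ crit(4) bb] crit by auto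
    have PV: "x^3 - (2*a)*x^2 + (2*(b-K))*x - 2*c = 2*x*((b-K) - Vf a c x)" if "x \<noteq> 0" for x
      unfolding Vf_def using that by (simp add: field_simps power2_eq_square power3_eq_cube)
    have Ub: "U C1 C2 C3 x = b \<longleftrightarrow> (C1-x-p1)*(C1-x-p2)*(C1-x-p3) = 0" if "x \<noteq> C1" for x
    proof -
      have "U C1 C2 C3 x = b \<longleftrightarrow> (b-K) - Vf a c (C1-x) = 0" using Ueq[OF that] by auto
      also have "\<dots> \<longleftrightarrow> 2*(C1-x)*((b-K) - Vf a c (C1-x)) = 0" using that by simp
      also have "\<dots> \<longleftrightarrow> (C1-x-p1)*(C1-x-p2)*(C1-x-p3) = 0"
        using PV[of "C1-x"] fac[of "C1-x"] that by simp
      finally show ?thesis .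
    qed
    have pm: "phi_minus C1 C2 C3 b = C1 - p2"
      unfolding phi_minus_def ph1 ph2
    proof (rule the_equality)
      show "C1 - pb < C1 - p2 \<and> C1 - p2 < C1 - pa \<and> U C1 C2 C3 (C1 - p2) = b"
        using P Ub[of "C1-p2"] crit by simp
      fix x assume x: "C1 - pb < x \<and> x < C1 - pa \<and> U C1 C2 C3 x = b"
      then have xC: "x \<noteq> C1" using crit by auto
      have "(C1-x-p1)*(C1-x-p2)*(C1-x-p3) = 0" using Ub[OF xC] x by simp
      then show "x = C1 - p2" using x P by auto
    qed
    have pp: "phi_plus C1 C2 C3 b = C1 - p1"
      unfolding phi_plus_def ph2
    proof (rule the_equality)
      show "C1 - pa < C1 - p1 \<and> C1 - p1 < C1 \<and> U C1 C2 C3 (C1 - p1) = b"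
        using P Ub[of "C1-p1"] crit by simp
      fix x assume x: "C1 - pa < x \<and> x < C1 \<and> U C1 C2 C3 x = b"
      then have xC: "x \<noteq> C1" by auto
      have "(C1-x-p1)*(C1-x-p2)*(C1-x-p3) = 0" using Ub[OF xC] x by simp
      then show "x = C1 - p1" using x P by auto
    qed
    have f: "1 / sqrt (2 * (b - U C1 C2 C3 x)) =
       1 / sqrt (((C1-x)-p1)*(p2-(C1-x))*(p3-(C1-x))/(C1-x))" if x: "x \<in> {C1-p2<..<C1-p1}" for x
    proof -
      have x0: "C1 - x \<noteq> 0" "x \<noteq> C1" using x P by auto
      have "2 * (b - U C1 C2 C3 x) = 2*((b-K) - Vf a c (C1-x))" using Ueq[OF x0(2)] by simp
      also have "\<dots> = (2*(C1-x)*((b-K) - Vf a c (C1-x)))/(C1-x)" using x0 by (simp add: field_simps)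
      also have "\<dots> = ((C1-x)-p1)*((C1-x)-p2)*((C1-x)-p3)/(C1-x)" using PV[OF x0(1)] fac[of "C1-x"] by simp
      also have "\<dots> = ((C1-x)-p1)*(p2-(C1-x))*(p3-(C1-x))/(C1-x)" by (simp add: algebra_simps)
      finally show ?thesis by simp
    qed
    have T': "0 < p1" "p1 < p2" "p2 < p3" using P by auto
    have hi: "((\<lambda>x. 1 / sqrt (2 * (b - U C1 C2 C3 x))) has_integral integral {0..pi} (Gint p1 p2 p3)) {C1-p2..C1-p1}"
      by (rule period_subst[OF T' f Gint_cont[OF T]])
    have "period_L C1 C2 C3 b = 2 * integral {0..pi} (Gint p1 p2 p3)"
      unfolding period_L_def pm pp using integral_unique[OF hi] by simp
    then show ?thesis using T fac by blast
  qed
  show ?thesis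
    unfolding strict_mono_on_def
  proof (intro allI impI, elim conjE)
    fix r s assume r: "r \<in> {b_minus C1 C2 C3 <..< b_plus C1 C2 C3}"
      and s: "s \<in> {b_minus C1 C2 C3 <..< b_plus C1 C2 C3}" and rs: "r < s"
    obtain p1 p2 p3 where T: "triple a c p1 p2 p3" and Lr: "period_L C1 C2 C3 r = 2 * integral {0..pi} (Gint p1 p2 p3)"
      and fr: "\<And>x. x^3 - (2*a)*x^2 + (2*(r-K))*x - 2*c = (x-p1)*(x-p2)*(x-p3)"
      using per[OF r] by blast
    obtain q1 q2 q3 where T': "triple a c q1 q2 q3" and Ls: "period_L C1 C2 C3 s = 2 * integral {0..pi} (Gint q1 q2 q3)"
      and fs: "\<And>x. x^3 - (2*a)*x^2 + (2*(s-K))*x - 2*c = (x-q1)*(x-q2)*(x-q3)"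
      using per[OF s] by blast
    have lt: "q3 < p3"
    proof (rule ccontr)
      assume "\<not> q3 < p3"
      then have q3: "q3 \<ge> p3" by simp
      have tp: "0 < p1" "p1 < p2" "p2 < p3" using T unfolding triple_def by auto
      have "(q3-p1)*(q3-p2)*(q3-p3) \<ge> 0" using q3 tp by simp
      moreover have "(q3-q1)*(q3-q2)*(q3-q3) = 0" by simp
      moreover have "q3^3 - (2*a)*q3^2 + (2*(s-K))*q3 - 2*c = q3^3 - (2*a)*q3^2 + (2*(r-K))*q3 - 2*c + 2*(s-r)*q3"
        by (simp add: algebra_simps)
      moreover have "2*(s-r)*q3 > 0" using rs q3 tp by simp
      ultimately show False using fr[of q3] fs[of q3] by linarith
    qed
    show "period_L C1 C2 C3 r < period_L C1 C2 C3 s"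
      unfolding Lr Ls using compare[OF c0 T T' lt] by simp
  qed
qed


end
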